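(* Any seller strategy, even an adaptive one, achieves expected revenue at most ${\sf MBRev}(\mathcal D)T+o(T)$ against a conservative buyer running a no-regret algorithm (i.e. a buyer who overbids with probability $0$).
   Context: Model: single seller, single buyer, $T$ rounds. Buyer's value drawn each round independently from $\mathcal D$ with finite support $0\le v_1<\dots<v_m\le1$, $\Pr[v_i]=q_i>0$. A seller strategy offers arms $0,\dots,K$ with bid labels $0=b_0<\dots<b_K\le1$; at round $t$ arm $i$ has allocation probability $a_{i,t}\in[0,1]$ and price $p_{i,t}\in[0,a_{i,t}b_i]$; arm 0 has $a_{0,t}=p_{0,t}=0$; monotone: $a_{i,t}\ge a_{j,t}$, $p_{i,t}\ge p_{j,t}$ for $i>j$. An adaptive seller may set round-$t$ parameters after seeing the history and the buyer's round-$t$ distribution over arms. Buyer utility from arm $i$ with value $v$: $va_{i,t}-p_{i,t}$. A conservative buyer never chooses an arm whose bid label exceeds his current value. No-regret here means: for each value $v_i$, the buyer's expected total utility over the rounds in which his value is $v_i$ is at least that of always playing any fixed arm $j$ with $b_j\le v_i$ in those rounds, minus $o(T)$. Mean-based revenue LP: maximize $\sum_i q_i(v_ix_i-u_i)$ subject to $u_i\ge(v_i-v_j)x_j$ for all $i>j$, $u_i\ge0$, $0\le x_i\le1$; its value is ${\sf MBRev}(\mathcal D)$. *)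

theory Defs
  imports "HOL-Probability.Probability" "HOL-Library.Landau_Symbols"
begin

text \<open>A round-t mechanism: allocation probabilities and prices of the arms (arm index :: nat).\<close>
type_synonym mech = "(nat \<Rightarrow> real) \<times> (nat \<Rightarrow> real)"

text \<open>A completed round: (buyer value, chosen arm, mechanism used).\<close>
type_synonym round = "real \<times> nat \<times> mech"
type_synonym hist = "round list"

type_synonym buyer_alg = "hist \<Rightarrow> real \<Rightarrow> nat pmf"

text \<open>Adaptive (possibly randomized) seller: given the history and the buyer's round-t
  distribution over arms (as a function of the value), chooses the round-t mechanism.\<close>
type_synonym seller_strat = "hist \<Rightarrow> (real \<Rightarrow> nat pmf) \<Rightarrow> mech pmf"

definition valid_labels :: "nat \<Rightarrow> (nat \<Rightarrow> real) \<Rightarrow> bool" where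
  "valid_labels K b \<longleftrightarrow> b 0 = 0 \<and> (\<forall>i<K. b i < b (Suc i)) \<and> b K \<le> 1"

definition valid_mech :: "nat \<Rightarrow> (nat \<Rightarrow> real) \<Rightarrow> mech \<Rightarrow> bool" where
  "valid_mech K b M \<longleftrightarrow>
     fst M 0 = 0 \<and> snd M 0 = 0 \<and>
     (\<forall>i\<le>K. 0 \<le> fst M i \<and> fst M i \<le> 1 \<and> 0 \<le> snd M i \<and> snd M i \<le> fst M i * b i) \<and>
     (\<forall>i\<le>K. \<forall>j<i. fst M j \<le> fst M i \<and> snd M j \<le> snd M i)"

definition valid_seller :: "nat \<Rightarrow> (nat \<Rightarrow> real) \<Rightarrow> seller_strat \<Rightarrow> bool" where
  "valid_seller K b S \<longleftrightarrow> valid_labels K b \<and>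
     (\<forall>h \<sigma>. \<forall>M \<in> set_pmf (S h \<sigma>). valid_mech K b M)"

definition buyer_arms :: "real pmf \<Rightarrow> nat \<Rightarrow> buyer_alg \<Rightarrow> bool" where
  "buyer_arms D K A \<longleftrightarrow> (\<forall>h. \<forall>v \<in> set_pmf D. set_pmf (A h v) \<subseteq> {..K})"

definition conservative :: "real pmf \<Rightarrow> (nat \<Rightarrow> real) \<Rightarrow> buyer_alg \<Rightarrow> bool" where
  "conservative D b A \<longleftrightarrow> (\<forall>h. \<forall>v \<in> set_pmf D. \<forall>j \<in> set_pmf (A h v). b j \<le> v)"

primrec play :: "real pmf \<Rightarrow> seller_strat \<Rightarrow> buyer_alg \<Rightarrow> nat \<Rightarrow> hist pmf" where
  "play D S A 0 = return_pmf []"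
| "play D S A (Suc t) =
     bind_pmf (play D S A t) (\<lambda>h.
     bind_pmf (S h (A h)) (\<lambda>M.
     bind_pmf D (\<lambda>v.
     bind_pmf (A h v) (\<lambda>j.
     return_pmf (h @ [(v, j, M)])))))"

definition revenue :: "real pmf \<Rightarrow> seller_strat \<Rightarrow> buyer_alg \<Rightarrow> nat \<Rightarrow> real" where
  "revenue D S A T = measure_pmf.expectation (play D S A T)
     (\<lambda>h. sum_list (map (\<lambda>(v, j, M). snd M j) h))"

definition util_actual :: "real pmf \<Rightarrow> seller_strat \<Rightarrow> buyer_alg \<Rightarrow> nat \<Rightarrow> real \<Rightarrow> real" where
  "util_actual D S A T w = measure_pmf.expectation (play D S A T)
     (\<lambda>h. sum_list (map (\<lambda>(v, j, M). if v = w then w * fst M j - snd M j else 0) h))"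

definition util_fixed :: "real pmf \<Rightarrow> seller_strat \<Rightarrow> buyer_alg \<Rightarrow> nat \<Rightarrow> real \<Rightarrow> nat \<Rightarrow> real" where
  "util_fixed D S A T w k = measure_pmf.expectation (play D S A T)
     (\<lambda>h. sum_list (map (\<lambda>(v, j, M). if v = w then w * fst M k - snd M k else 0) h))"

definition mb_feasible :: "real pmf \<Rightarrow> (real \<Rightarrow> real) \<Rightarrow> (real \<Rightarrow> real) \<Rightarrow> bool" where
  "mb_feasible D x u \<longleftrightarrow> (\<forall>v \<in> set_pmf D. 0 \<le> u v \<and> 0 \<le> x v \<and> x v \<le> 1 \<and>
     (\<forall>w \<in> set_pmf D. w < v \<longrightarrow> (v - w) * x w \<le> u v))"

definition MBRev :: "real pmf \<Rightarrow> real" where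
  "MBRev D = Sup {(\<Sum>v \<in> set_pmf D. pmf D v * (v * x v - u v)) | x u. mb_feasible D x u}"

end

theory Submission
  imports Defs
begin


lemma pmf_int_bdd:
  fixes f :: "'a \<Rightarrow> real"
  assumes "\<And>x. x \<in> set_pmf p \<Longrightarrow> \<bar>f x\<bar> \<le> B"
  shows "integrable (measure_pmf p) f"
  by (rule measure_pmf.integrable_const_bound[where B=B]) (auto simp: AE_measure_pmf_iff assms)

lemma pmf_exp_bdd:
  fixes f :: "'a \<Rightarrow> real"
  assumes "\<And>x. x \<in> set_pmf p \<Longrightarrow> \<bar>f x\<bar> \<le> B"
  shows "\<bar>measure_pmf.expectation p f\<bar> \<le> B"
proof -
  have i: "integrable (measure_pmf p) f" by (rule pmf_int_bdd[OF assms])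
  have "measure_pmf.expectation p f \<le> B"
    by (rule measure_pmf.integral_le_const[OF i]) (auto simp: AE_measure_pmf_iff dest: assms)
  moreover have "-B \<le> measure_pmf.expectation p f"
    by (rule measure_pmf.integral_ge_const[OF i]) (auto simp: AE_measure_pmf_iff dest: assms)
  ultimately show ?thesis by linarith
qed

lemma pmf_exp_const[simp]: "measure_pmf.expectation p (\<lambda>_. c::real) = c"
  by (simp add: measure_pmf.prob_space)

lemma integral_bind_pmf_bdd:
  fixes f :: "'b \<Rightarrow> real"
  assumes B: "\<And>y. y \<in> set_pmf (bind_pmf M N) \<Longrightarrow> \<bar>f y\<bar> \<le> B"
  shows "measure_pmf.expectation (bind_pmf M N) f =
         measure_pmf.expectation M (\<lambda>x. measure_pmf.expectation (N x) f)"
proof -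
  define f' where "f' y = max (-\<bar>B\<bar>) (min \<bar>B\<bar> (f y))" for y
  have eq: "\<And>y. y \<in> set_pmf (bind_pmf M N) \<Longrightarrow> f' y = f y" using B unfolding f'_def
    by (smt (verit))
  have "measure_pmf.expectation (bind_pmf M N) f = measure_pmf.expectation (bind_pmf M N) f'"
    by (rule integral_cong_AE) (auto simp: AE_measure_pmf_iff eq)
  also have "\<dots> = measure_pmf.expectation M (\<lambda>x. measure_pmf.expectation (N x) f')"
    unfolding measure_pmf_bind
    using measurable_space[OF measurable_measure_pmf[of N]]
    by (intro integral_bind[where K="count_space UNIV" and B="\<bar>B\<bar>" and B'=1])
       (auto simp: f'_def measure_pmf.finite_measure measure_pmf.emeasure_space_1)
  also have "\<dots> = measure_pmf.expectation M (\<lambda>x. measure_pmf.expectation (N x) f)"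
    proof (rule integral_cong_AE)
    show "AE x in measure_pmf M. measure_pmf.expectation (N x) f' = measure_pmf.expectation (N x) f"
      unfolding AE_measure_pmf_iff
      by (auto intro!: integral_cong_AE simp: AE_measure_pmf_iff intro!: eq; blast)
  qed simp_all
  finally show ?thesis .
qed

definition R :: "real pmf \<Rightarrow> seller_strat \<Rightarrow> buyer_alg \<Rightarrow> hist \<Rightarrow> round pmf" where
  "R D S A h = bind_pmf (S h (A h)) (\<lambda>M. bind_pmf D (\<lambda>v. bind_pmf (A h v) (\<lambda>j. return_pmf (v, j, M))))"

lemma play_Suc_map: "play D S A (Suc t) = bind_pmf (play D S A t) (\<lambda>h. map_pmf (\<lambda>x. h @ [x]) (R D S A h))"
  by (simp add: R_def map_bind_pmf map_return_pmf)

lemma play_length: "h \<in> set_pmf (play D S A t) \<Longrightarrow> length h = t"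
  by (induction t arbitrary: h) auto

lemma sum_list_bdd: "(\<And>x. x \<in> set xs \<Longrightarrow> \<bar>\<phi> x\<bar> \<le> B) \<Longrightarrow> \<bar>sum_list (map \<phi> xs)\<bar> \<le> real (length xs) * B"
proof (induction xs)
  case Nil then show ?case by simp
next
  case (Cons a xs)
  have "\<bar>\<phi> a\<bar> \<le> B" using Cons.prems by simp
  moreover have "\<bar>sum_list (map \<phi> xs)\<bar> \<le> real (length xs) * B" using Cons by simp
  ultimately show ?case by (simp add: algebra_simps)
qed

lemma EH_Suc:
  fixes \<phi> :: "round \<Rightarrow> real"
  assumes B: "\<And>x. \<bar>\<phi> x\<bar> \<le> B"
  shows "measure_pmf.expectation (play D S A (Suc t)) (\<lambda>h. sum_list (map \<phi> h)) =
     measure_pmf.expectation (play D S A t) (\<lambda>h. sum_list (map \<phi> h)) +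
     measure_pmf.expectation (play D S A t) (\<lambda>h. measure_pmf.expectation (R D S A h) \<phi>)"
proof -
  have bd: "\<bar>sum_list (map \<phi> h)\<bar> \<le> real (length h) * B" for h
    by (rule sum_list_bdd) (use B in auto)
  have "measure_pmf.expectation (play D S A (Suc t)) (\<lambda>h. sum_list (map \<phi> h)) =
      measure_pmf.expectation (play D S A t) (\<lambda>h. measure_pmf.expectation (map_pmf (\<lambda>x. h @ [x]) (R D S A h)) (\<lambda>h. sum_list (map \<phi> h)))"
    unfolding play_Suc_map
  proof (rule integral_bind_pmf_bdd[where B="real (Suc t) * B"])
    fix y assume "y \<in> set_pmf (play D S A t \<bind> (\<lambda>h. map_pmf (\<lambda>x. h @ [x]) (R D S A h)))"
    hence "y \<in> set_pmf (play D S A (Suc t))" by (simp only: play_Suc_map)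
    hence "length y = Suc t" by (rule play_length)
    thus "\<bar>sum_list (map \<phi> y)\<bar> \<le> real (Suc t) * B" using bd[of y] by simp
  qed
  also have "\<dots> = measure_pmf.expectation (play D S A t) (\<lambda>h. sum_list (map \<phi> h) + measure_pmf.expectation (R D S A h) \<phi>)"
  proof (rule integral_cong_AE)
    show "AE h in measure_pmf (play D S A t). measure_pmf.expectation (map_pmf (\<lambda>x. h @ [x]) (R D S A h)) (\<lambda>h. sum_list (map \<phi> h)) = sum_list (map \<phi> h) + measure_pmf.expectation (R D S A h) \<phi>"
    proof (rule AE_pmfI)
      fix h
      have i: "integrable (measure_pmf (R D S A h)) \<phi>" by (rule pmf_int_bdd) (rule B)
      show "measure_pmf.expectation (map_pmf (\<lambda>x. h @ [x]) (R D S A h)) (\<lambda>h. sum_list (map \<phi> h)) = sum_list (map \<phi> h) + measure_pmf.expectation (R D S A h) \<phi>"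
        using i by simp
    qed
  qed simp_all
  also have "\<dots> = measure_pmf.expectation (play D S A t) (\<lambda>h. sum_list (map \<phi> h)) +
     measure_pmf.expectation (play D S A t) (\<lambda>h. measure_pmf.expectation (R D S A h) \<phi>)"
  proof (rule Bochner_Integration.integral_add)
    show "integrable (measure_pmf (play D S A t)) (\<lambda>h. sum_list (map \<phi> h))"
      by (rule pmf_int_bdd[where B="real t * B"]) (use bd play_length in fastforce)
    show "integrable (measure_pmf (play D S A t)) (\<lambda>h. measure_pmf.expectation (R D S A h) \<phi>)"
      by (rule pmf_int_bdd[where B=B], rule pmf_exp_bdd) (rule B)
  qed
  finally show ?thesis .
qed

lemma exp_D_point: "measure_pmf.expectation D (\<lambda>v. if v = w then c else 0::real) = pmf D w * c"
  by (subst integral_measure_pmf_real[where A="{w}"]) (auto split: if_splits)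

lemma R_expect:
  fixes \<phi> :: "round \<Rightarrow> real"
  assumes B: "\<And>x. \<bar>\<phi> x\<bar> \<le> B"
  shows "measure_pmf.expectation (R D S A h) \<phi> =
    measure_pmf.expectation (S h (A h)) (\<lambda>M. measure_pmf.expectation D (\<lambda>v.
      measure_pmf.expectation (A h v) (\<lambda>j. \<phi> (v, j, M))))"
  unfolding R_def
  apply (subst integral_bind_pmf_bdd[where B=B], rule B)
  apply (rule integral_cong_AE, simp, simp)
  apply (rule AE_pmfI)
  apply (subst integral_bind_pmf_bdd[where B=B], rule B)
  apply (rule integral_cong_AE, simp, simp)
  apply (rule AE_pmfI)
  apply (subst integral_bind_pmf_bdd[where B=B], rule B)
  apply simp
  done

lemma R_indep:
  fixes f :: "mech \<Rightarrow> real"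
  assumes B: "\<And>M. \<bar>f M\<bar> \<le> B"
  shows "measure_pmf.expectation (R D S A h) (\<lambda>(v, j, M). if v = w then f M else 0) =
     pmf D w * measure_pmf.expectation (R D S A h) (\<lambda>(v, j, M). f M)"
proof -
  have B0: "0 \<le> B" using B[of undefined] by simp
  have "measure_pmf.expectation (R D S A h) (\<lambda>(v, j, M). if v = w then f M else 0) =
     measure_pmf.expectation (S h (A h)) (\<lambda>M. pmf D w * f M)"
    by (subst R_expect[where B=B]) (auto simp: B B0 exp_D_point)
  also have "\<dots> = pmf D w * measure_pmf.expectation (S h (A h)) f" by simp
  also have "measure_pmf.expectation (S h (A h)) f = measure_pmf.expectation (R D S A h) (\<lambda>(v, j, M). f M)"
    by (subst R_expect[where B=B]) (auto simp: B)
  finally show ?thesis .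
qed

lemma play_indep:
  fixes f :: "mech \<Rightarrow> real"
  assumes B: "\<And>M. \<bar>f M\<bar> \<le> B"
  shows "measure_pmf.expectation (play D S A t) (\<lambda>h. sum_list (map (\<lambda>(v, j, M). if v = w then f M else 0) h)) =
     pmf D w * measure_pmf.expectation (play D S A t) (\<lambda>h. sum_list (map (\<lambda>(v, j, M). f M) h))"
proof (induction t)
  case 0 then show ?case by simp
next
  case (Suc t)
  have B0: "0 \<le> B" using B[of undefined] by simp
  have b1: "\<bar>(\<lambda>(v, j, M). if v = w then f M else 0) x\<bar> \<le> B" for x
    using B B0 by (auto split: prod.splits)
  have b2: "\<bar>(\<lambda>(v, j, M). f M) x\<bar> \<le> B" for x
    using B B0 by (auto split: prod.splits)
  have i: "integrable (measure_pmf (play D S A t)) (\<lambda>h. measure_pmf.expectation (R D S A h) (\<lambda>(v, j, M). f M))"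
    by (rule pmf_int_bdd[where B=B], rule pmf_exp_bdd) (rule b2)
  show ?case
    unfolding EH_Suc[OF b1] EH_Suc[OF b2] Suc R_indep[OF B]
    using i by (simp add: algebra_simps)
qed

definition goodr :: "real pmf \<Rightarrow> nat \<Rightarrow> (nat \<Rightarrow> real) \<Rightarrow> round \<Rightarrow> bool" where
  "goodr D K b x = (case x of (v, j, M) \<Rightarrow> v \<in> set_pmf D \<and> j \<le> K \<and> b j \<le> v \<and> valid_mech K b M)"

lemma play_good:
  assumes "valid_seller K b S" "buyer_arms D K A" "conservative D b A"
  shows "h \<in> set_pmf (play D S A t) \<Longrightarrow> x \<in> set h \<Longrightarrow> goodr D K b x"
proof (induction t arbitrary: h)
  case 0 then show ?case by simp
next
  case (Suc t)
  then obtain h0 M v j where h: "h = h0 @ [(v, j, M)]" "h0 \<in> set_pmf (play D S A t)"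
    "M \<in> set_pmf (S h0 (A h0))" "v \<in> set_pmf D" "j \<in> set_pmf (A h0 v)" by auto
  show ?case
  proof (cases "x \<in> set h0")
    case True then show ?thesis using Suc.IH h(2) by blast
  next
    case False
    hence "x = (v, j, M)" using Suc.prems h(1) by auto
    thus ?thesis using assms h unfolding goodr_def valid_seller_def buyer_arms_def conservative_def
      by auto
  qed
qed

lemma EH_int:
  fixes \<phi> :: "'a \<Rightarrow> real"
  assumes "\<And>h. h \<in> set_pmf P \<Longrightarrow> length h = L \<and> (\<forall>x\<in>set h. G x)" "\<And>x. G x \<Longrightarrow> \<bar>\<phi> x\<bar> \<le> B"
  shows "integrable (measure_pmf P) (\<lambda>h. sum_list (map \<phi> h))"
proof (rule pmf_int_bdd[where B="real L * B"])
  fix h assume "h \<in> set_pmf P"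
  with assms(1) have "length h = L" "\<forall>x\<in>set h. G x" by auto
  thus "\<bar>sum_list (map \<phi> h)\<bar> \<le> real L * B" using sum_list_bdd[of h \<phi> B] assms(2) by auto
qed

lemma EH_cong:
  fixes \<phi> :: "'a \<Rightarrow> real"
  assumes "\<And>h. h \<in> set_pmf P \<Longrightarrow> (\<forall>x\<in>set h. G x)" "\<And>x. G x \<Longrightarrow> \<phi> x = \<psi> x"
  shows "measure_pmf.expectation P (\<lambda>h. sum_list (map \<phi> h)) = measure_pmf.expectation P (\<lambda>h. sum_list (map \<psi> h))"
  by (rule integral_cong_AE) (auto simp: AE_measure_pmf_iff intro!: arg_cong[where f=sum_list] map_cong dest: assms)

lemma EH_mono:
  fixes \<phi> :: "'a \<Rightarrow> real"
  assumes "\<And>h. h \<in> set_pmf P \<Longrightarrow> length h = L \<and> (\<forall>x\<in>set h. G x)"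
    "\<And>x. G x \<Longrightarrow> \<bar>\<phi> x\<bar> \<le> B" "\<And>x. G x \<Longrightarrow> \<bar>\<psi> x\<bar> \<le> B'"
    "\<And>x. G x \<Longrightarrow> \<phi> x \<le> \<psi> x"
  shows "measure_pmf.expectation P (\<lambda>h. sum_list (map \<phi> h)) \<le> measure_pmf.expectation P (\<lambda>h. sum_list (map \<psi> h))"
proof (rule integral_mono_AE)
  show "integrable (measure_pmf P) (\<lambda>h. sum_list (map \<phi> h))" by (rule EH_int[OF assms(1,2)])
  show "integrable (measure_pmf P) (\<lambda>h. sum_list (map \<psi> h))" by (rule EH_int[OF assms(1,3)])
  show "AE h in measure_pmf P. sum_list (map \<phi> h) \<le> sum_list (map \<psi> h)"
    unfolding AE_measure_pmf_iff by (auto intro!: sum_list_mono dest: assms(1) assms(4))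
qed

lemma sum_list_cmult: "sum_list (map (\<lambda>(v, j, M). c * f M) h) = (c::real) * sum_list (map (\<lambda>(v, j, M). f M) h)"
  by (induction h) (auto simp: algebra_simps)

lemma sum_list_swap: "finite W \<Longrightarrow> sum_list (map (\<lambda>x. \<Sum>w\<in>W. g w x) xs) = (\<Sum>w\<in>W. sum_list (map (g w) xs :: real list))"
  by (induction xs) (auto simp: sum.distrib)

lemma sum_list_one: "sum_list (map (\<lambda>(v::real, j::nat, M::mech). 1::real) h) = real (length h)"
  by (induction h) auto

lemma sum_list_rev_decomp:
  "(w::real) * sum_list (map (\<lambda>(v, j, M). if v = w then fst M j else 0) h)
   - sum_list (map (\<lambda>(v, j, M). if v = w then w * fst M j - snd M j else 0) h)
   = sum_list (map (\<lambda>(v, j, M). if v = w then snd M j else 0) h)"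
  by (induction h) (auto simp: algebra_simps)

lemma MBRev_upper:
  assumes "finite (set_pmf D)" "set_pmf D \<subseteq> {0..1}" "mb_feasible D x u"
  shows "(\<Sum>v \<in> set_pmf D. pmf D v * (v * x v - u v)) \<le> MBRev D"
  unfolding MBRev_def
proof (rule cSup_upper)
  show "(\<Sum>v \<in> set_pmf D. pmf D v * (v * x v - u v)) \<in> {(\<Sum>v \<in> set_pmf D. pmf D v * (v * x v - u v)) | x u. mb_feasible D x u}"
    using assms(3) by blast
  show "bdd_above {(\<Sum>v \<in> set_pmf D. pmf D v * (v * x v - u v)) | x u. mb_feasible D x u}"
  proof (rule bdd_aboveI[where M="real (card (set_pmf D))"])
    fix y assume "y \<in> {(\<Sum>v \<in> set_pmf D. pmf D v * (v * x v - u v)) | x u. mb_feasible D x u}"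
    then obtain x u where y: "y = (\<Sum>v \<in> set_pmf D. pmf D v * (v * x v - u v))" and f: "mb_feasible D x u" by blast
    have "y \<le> (\<Sum>v \<in> set_pmf D. 1)"
      unfolding y
    proof (rule sum_mono)
      fix v assume v: "v \<in> set_pmf D"
      have "0 \<le> v" "v \<le> 1" using v assms(2) by auto
      moreover have "0 \<le> u v" "0 \<le> x v" "x v \<le> 1" using f v unfolding mb_feasible_def by auto
      ultimately have "v * x v - u v \<le> 1" by (smt (verit) mult_le_one)
      moreover have "0 \<le> pmf D v" "pmf D v \<le> 1" by (auto simp: pmf_le_1)
      ultimately show "pmf D v * (v * x v - u v) \<le> 1"
        by (smt (verit) mult_left_mono mult_le_one mult_nonneg_nonpos mult_nonpos_nonneg)
    qed
    thus "y \<le> real (card (set_pmf D))" by simp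
  qed
qed

lemma main_T:
  fixes D :: "real pmf" and K :: nat and b :: "nat \<Rightarrow> real" and S :: seller_strat and A :: buyer_alg
  assumes fin: "finite (set_pmf D)" and V01: "set_pmf D \<subseteq> {0..1}"
    and vs: "valid_seller K b S" and ba: "buyer_arms D K A" and cons: "conservative D b A"
    and nr: "\<forall>v\<in>set_pmf D. \<forall>k\<le>K. b k \<le> v \<longrightarrow> util_fixed D S A T v k \<le> util_actual D S A T v + \<rho>"
  shows "revenue D S A T \<le> MBRev D * real T + real (card (set_pmf D)) * \<bar>\<rho>\<bar>"
proof (cases "T = 0")
  case True thus ?thesis by (simp add: revenue_def)
next
  case False
  hence Tpos: "real T > 0" by simp
  define V where "V = set_pmf D"
  define P where "P = play D S A T"
  define G where "G = goodr D K b"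
  have supp: "\<And>h. h \<in> set_pmf P \<Longrightarrow> length h = T \<and> (\<forall>x\<in>set h. G x)"
    using play_good[OF vs ba cons] play_length unfolding P_def G_def by blast
  have supp': "\<And>h. h \<in> set_pmf P \<Longrightarrow> (\<forall>x\<in>set h. G x)" using supp by blast
  have vl: "valid_labels K b" using vs by (simp add: valid_seller_def)
  have b0: "b 0 = 0" using vl by (simp add: valid_labels_def)
  have Gd: "G (v,j,M) \<longleftrightarrow> v \<in> V \<and> j \<le> K \<and> b j \<le> v \<and> valid_mech K b M" for v j M
    by (simp add: G_def goodr_def V_def)
  have vm: "valid_mech K b M \<Longrightarrow> k \<le> K \<Longrightarrow> 0 \<le> fst M k \<and> fst M k \<le> 1 \<and> 0 \<le> snd M k \<and> snd M k \<le> fst M k * b k" for M k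
    by (simp add: valid_mech_def)
  have vmono: "valid_mech K b M \<Longrightarrow> i \<le> K \<Longrightarrow> j \<le> i \<Longrightarrow> fst M j \<le> fst M i" for M i j
    unfolding valid_mech_def by (cases "j = i") auto
  have V01': "v \<in> V \<Longrightarrow> 0 \<le> v \<and> v \<le> 1" for v using V01 V_def by auto
  have qpos: "v \<in> V \<Longrightarrow> pmf D v > 0" for v by (simp add: V_def pmf_positive)
  have fstb: "G (v,j,M) \<Longrightarrow> 0 \<le> fst M j \<and> fst M j \<le> 1" for v j M using vm by (auto simp: Gd)
  have sndb: "G (v,j,M) \<Longrightarrow> 0 \<le> snd M j \<and> snd M j \<le> 1" for v j M
  proof -
    assume g: "G (v,j,M)"
    hence h: "0 \<le> fst M j" "fst M j \<le> 1" "0 \<le> snd M j" "snd M j \<le> fst M j * b j" "b j \<le> 1"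
    proof -
      from g have "v \<in> V" "j \<le> K" "b j \<le> v" "valid_mech K b M" by (auto simp: Gd)
      thus "0 \<le> fst M j" "fst M j \<le> 1" "0 \<le> snd M j" "snd M j \<le> fst M j * b j" "b j \<le> 1"
        using vm[of M j] V01'[of v] by auto
    qed
    have "fst M j * b j \<le> 1"
      proof (cases "b j \<ge> 0")
      case True thus ?thesis using h by (auto intro: mult_le_one)
    next
      case False thus ?thesis using h mult_nonneg_nonpos[of "fst M j" "b j"] by auto
    qed
    thus ?thesis using h by linarith
  qed

  have fstb': "G (v,j,(a,p)) \<Longrightarrow> 0 \<le> a j \<and> a j \<le> 1" for v j a p using fstb[of v j "(a,p)"] by simp
  have sndb': "G (v,j,(a,p)) \<Longrightarrow> 0 \<le> p j \<and> p j \<le> 1" for v j a p using sndb[of v j "(a,p)"] by simp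
  define X where "X w = measure_pmf.expectation P (\<lambda>h. sum_list (map (\<lambda>(v,j,M). if v = w then fst M j else 0) h))" for w
  define U where "U w = util_actual D S A T w" for w
  define cl where "cl k M = max 0 (min (1::real) (fst M k))" for k :: nat and M :: mech
  have clb: "\<bar>cl k M\<bar> \<le> 1" for k M by (simp add: cl_def)
  have cl_eq: "valid_mech K b M \<Longrightarrow> k \<le> K \<Longrightarrow> cl k M = fst M k" for k M
    using vm[of M k] by (simp add: cl_def)
  define Y where "Y k = measure_pmf.expectation P (\<lambda>h. sum_list (map (\<lambda>(v,j,M). cl k M) h))" for k
  have indep: "measure_pmf.expectation P (\<lambda>h. sum_list (map (\<lambda>(v,j,M). if v = w then cl k M else 0) h)) = pmf D w * Y k" for w k
    unfolding P_def Y_def by (rule play_indep[OF clb])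

  have Upos: "0 \<le> U w + \<rho>" if w: "w \<in> V" for w
  proof -
    have "util_fixed D S A T w 0 = measure_pmf.expectation P (\<lambda>h. sum_list (map (\<lambda>_. 0) h))"
      unfolding util_fixed_def P_def[symmetric]
      by (rule EH_cong[OF supp']) (auto simp: Gd valid_mech_def)
    hence "util_fixed D S A T w 0 = 0" by simp
    with nr b0 V01'[OF w] w show ?thesis by (force simp: V_def U_def)
  qed

  have Xnn: "0 \<le> X w" for w
  proof -
    have "measure_pmf.expectation P (\<lambda>h. sum_list (map (\<lambda>_. 0) h)) \<le> X w"
      unfolding X_def
      by (rule EH_mono[OF supp, where B=0 and B'=1]) (auto dest: fstb')
    thus ?thesis by simp
  qed

  have Xle: "X w \<le> pmf D w * real T" for w
  proof -
    have "X w \<le> measure_pmf.expectation P (\<lambda>h. sum_list (map (\<lambda>(v,j,M). if v = w then 1 else 0) h))"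
      unfolding X_def
      by (rule EH_mono[OF supp, where B=1 and B'=1]) (auto dest: fstb')
    also have "\<dots> = pmf D w * measure_pmf.expectation P (\<lambda>h. sum_list (map (\<lambda>(v,j,M). 1) h))"
      unfolding P_def using play_indep[of "\<lambda>_. 1" 1 D S A T w] by simp
    also have "measure_pmf.expectation P (\<lambda>h. sum_list (map (\<lambda>(v::real,j::nat,M::mech). 1::real) h)) = real T"
    proof -
      have "measure_pmf.expectation P (\<lambda>h. sum_list (map (\<lambda>(v::real,j::nat,M::mech). 1::real) h)) = measure_pmf.expectation P (\<lambda>h. real T)"
        by (rule integral_cong_AE) (auto simp: AE_measure_pmf_iff sum_list_one dest: supp)
      thus ?thesis by simp
    qed
    finally show ?thesis .
  qed

  have constr: "(v - w) * X w / pmf D w \<le> (U v + \<rho>) / pmf D v" if v: "v \<in> V" and w: "w \<in> V" and wv: "w < v" for v w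
  proof -
    define Kw where "Kw = {k. k \<le> K \<and> b k \<le> w}"
    have Kwf: "finite Kw" unfolding Kw_def by simp
    have "0 \<in> Kw" using b0 V01'[OF w] by (simp add: Kw_def)
    define k where "k = Max Kw"
    have "k \<in> Kw" using Max_in[OF Kwf] \<open>0 \<in> Kw\<close> unfolding k_def by blast
    hence kin: "k \<le> K" "b k \<le> w" unfolding Kw_def by auto
    have kge: "j \<le> K \<Longrightarrow> b j \<le> w \<Longrightarrow> j \<le> k" for j
      unfolding k_def using Max_ge[OF Kwf] by (auto simp: Kw_def)
    have "X w \<le> measure_pmf.expectation P (\<lambda>h. sum_list (map (\<lambda>(v,j,M). if v = w then cl k M else 0) h))"
      unfolding X_def
    proof (rule EH_mono[OF supp, where B=1 and B'=1])
      fix x assume gx: "G x"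
      obtain v' j M where x: "x = (v', j, M)" by (cases x) auto
      show "(case x of (v, j, M) \<Rightarrow> if v = w then fst M j else 0) \<le> (case x of (v, j, M) \<Rightarrow> if v = w then cl k M else 0)"
        using gx kin kge[of j] vmono[of M k j] cl_eq[of M k] unfolding x by (auto simp: Gd)
    qed (auto simp: clb split: prod.splits dest: fstb')
    hence Xk: "X w \<le> pmf D w * Y k" using indep by simp
    have "measure_pmf.expectation P (\<lambda>h. sum_list (map (\<lambda>(v',j,M). if v' = v then (v - w) * cl k M else 0) h))
       \<le> util_fixed D S A T v k"
      unfolding util_fixed_def P_def[symmetric]
    proof (rule EH_mono[OF supp, where B="\<bar>v - w\<bar>" and B'="\<bar>v\<bar> + \<bar>b k\<bar>"])
      fix x assume gx: "G x"
      obtain v' j M where x: "x = (v', j, M)" by (cases x) auto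
      have mv: "valid_mech K b M" using gx x by (simp add: Gd)
      have "(v - w) * fst M k \<le> v * fst M k - snd M k"
      proof -
        have h: "0 \<le> fst M k" "snd M k \<le> fst M k * b k" using vm[OF mv kin(1)] by auto
        have "fst M k * b k \<le> fst M k * w" using h(1) kin(2) by (rule mult_left_mono[rotated])
        moreover have "(v - w) * fst M k = v * fst M k - fst M k * w" by (simp add: algebra_simps)
        ultimately show ?thesis using h(2) by linarith
      qed
      thus "(case x of (v', j, M) \<Rightarrow> if v' = v then (v - w) * cl k M else 0) \<le> (case x of (v', j, M) \<Rightarrow> if v' = v then v * fst M k - snd M k else 0)"
        unfolding x using cl_eq[OF mv kin(1)] by simp
      show "\<bar>case x of (v', j, M) \<Rightarrow> if v' = v then (v - w) * cl k M else 0\<bar> \<le> \<bar>v - w\<bar>"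
        unfolding x using clb[of k M] by (simp add: abs_mult mult_left_le)
      show "\<bar>case x of (v', j, M) \<Rightarrow> if v' = v then v * fst M k - snd M k else 0\<bar> \<le> \<bar>v\<bar> + \<bar>b k\<bar>"
      proof -
        have h: "0 \<le> fst M k" "fst M k \<le> 1" "0 \<le> snd M k" "snd M k \<le> fst M k * b k" using vm[OF mv kin(1)] by auto
        have "\<bar>v * fst M k\<bar> \<le> \<bar>v\<bar>" using h by (simp add: abs_mult mult_left_le)
        moreover have "\<bar>snd M k\<bar> \<le> \<bar>b k\<bar>" using h
        proof -
          have "fst M k * b k \<le> \<bar>b k\<bar>"
          proof (cases "b k \<ge> 0")
            case True thus ?thesis using h mult_left_le_one_le[of "b k" "fst M k"] by (simp add: mult.commute)
          next
            case False thus ?thesis using h mult_nonneg_nonpos[of "fst M k" "b k"] by auto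
          qed
          thus ?thesis using h by simp
        qed
        ultimately show ?thesis unfolding x by (simp add: abs_triangle_ineq4 order_trans[OF abs_triangle_ineq4])
      qed
    qed
    moreover have "measure_pmf.expectation P (\<lambda>h. sum_list (map (\<lambda>(v',j,M). if v' = v then (v - w) * cl k M else 0) h))
       = pmf D v * ((v - w) * Y k)"
    proof -
      have "measure_pmf.expectation P (\<lambda>h. sum_list (map (\<lambda>(v',j,M). if v' = v then (v - w) * cl k M else 0) h))
        = pmf D v * measure_pmf.expectation P (\<lambda>h. sum_list (map (\<lambda>(v',j,M). (v - w) * cl k M) h))"
        unfolding P_def by (rule play_indep[where B="\<bar>v - w\<bar>"]) (simp add: abs_mult clb mult_left_le)
      also have "\<dots> = pmf D v * ((v - w) * Y k)"
        unfolding Y_def sum_list_cmult by simp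
      finally show ?thesis .
    qed
    ultimately have "pmf D v * ((v - w) * Y k) \<le> U v + \<rho>" using nr v kin wv unfolding U_def V_def by force
    hence A: "(v - w) * Y k \<le> (U v + \<rho>) / pmf D v" using qpos[OF v] by (simp add: field_simps)
    have "(v - w) * X w / pmf D w \<le> (v - w) * (pmf D w * Y k) / pmf D w"
      using Xk wv qpos[OF w] by (intro divide_right_mono mult_left_mono) auto
    also have "\<dots> = (v - w) * Y k" using qpos[OF w] by simp
    finally show ?thesis using A by linarith
  qed

  define x where "x w = X w / (pmf D w * real T)" for w
  define u where "u w = (U w + \<rho>) / (pmf D w * real T)" for w
  have feas: "mb_feasible D x u"
    unfolding mb_feasible_def
  proof (intro ballI conjI impI)
    fix v assume v: "v \<in> set_pmf D"
    hence q: "pmf D v > 0" using qpos V_def by simp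
    show "0 \<le> u v" unfolding u_def using Upos[of v] v q Tpos V_def by simp
    show "0 \<le> x v" unfolding x_def using Xnn[of v] q Tpos by simp
    show "x v \<le> 1" unfolding x_def using Xle[of v] q Tpos by simp
    fix w assume w: "w \<in> set_pmf D" and wv: "w < v"
    have "(v - w) * X w / pmf D w \<le> (U v + \<rho>) / pmf D v" using constr v w wv V_def by simp
    hence "(v - w) * X w / pmf D w / real T \<le> (U v + \<rho>) / pmf D v / real T"
      by (rule divide_right_mono) (use Tpos in simp)
    moreover have "(v - w) * x w = (v - w) * X w / pmf D w / real T"
      unfolding x_def by (simp add: divide_divide_eq_left)
    moreover have "u v = (U v + \<rho>) / pmf D v / real T"
      unfolding u_def by (simp add: divide_divide_eq_left)
    ultimately show "(v - w) * x w \<le> u v" by simp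
  qed
  have obj: "(\<Sum>v \<in> set_pmf D. pmf D v * (v * x v - u v)) = (\<Sum>v\<in>V. v * X v - U v - \<rho>) / real T"
    unfolding sum_divide_distrib V_def
  proof (rule sum.cong[OF refl])
    fix v assume "v \<in> set_pmf D"
    hence q: "pmf D v > 0" by (simp add: pmf_positive)
    show "pmf D v * (v * x v - u v) = (v * X v - U v - \<rho>) / real T"
      unfolding x_def u_def using q Tpos by (simp add: field_simps)
  qed
  define Z where "Z w = measure_pmf.expectation P (\<lambda>h. sum_list (map (\<lambda>(v,j,M). if v = w then snd M j else 0) h))" for w
  have XUZ: "w * X w - U w = Z w" for w
  proof -
    have i1: "integrable (measure_pmf P) (\<lambda>h. sum_list (map (\<lambda>(v,j,M). if v = w then fst M j else 0) h))"
    proof (rule EH_int[OF supp, where B=1])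
      fix r assume gr: "G r"
      obtain v j a p where r: "r = (v, j, (a, p))" by (cases r) auto
      show "\<bar>case r of (v, j, M) \<Rightarrow> if v = w then fst M j else 0\<bar> \<le> 1"
        using fstb'[of v j a p] gr unfolding r by simp
    qed
    have i2: "integrable (measure_pmf P) (\<lambda>h. sum_list (map (\<lambda>(v,j,M). if v = w then w * fst M j - snd M j else 0) h))"
    proof (rule EH_int[OF supp, where B="\<bar>w\<bar> + 1"])
      fix r assume gr: "G r"
      obtain v j a p where r: "r = (v, j, (a, p))" by (cases r) auto
      have h: "0 \<le> a j" "a j \<le> 1" "0 \<le> p j" "p j \<le> 1" using fstb'[of v j a p] sndb'[of v j a p] gr r by auto
      have "\<bar>w * a j - p j\<bar> \<le> \<bar>w\<bar> + 1"
      proof -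
        have "\<bar>w * a j\<bar> \<le> \<bar>w\<bar>" using h by (simp add: abs_mult mult_left_le)
        thus ?thesis using h by linarith
      qed
      thus "\<bar>case r of (v, j, M) \<Rightarrow> if v = w then w * fst M j - snd M j else 0\<bar> \<le> \<bar>w\<bar> + 1"
        unfolding r by simp
    qed
    have "w * X w - U w = measure_pmf.expectation P (\<lambda>h. w * sum_list (map (\<lambda>(v,j,M). if v = w then fst M j else 0) h)
       - sum_list (map (\<lambda>(v,j,M). if v = w then w * fst M j - snd M j else 0) h))"
      unfolding X_def U_def util_actual_def P_def[symmetric]
      using i1 i2 by simp
    also have "\<dots> = Z w" unfolding Z_def sum_list_rev_decomp ..
    finally show ?thesis .
  qed
  have rev: "revenue D S A T = (\<Sum>w\<in>V. Z w)"
  proof -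
    have "revenue D S A T = measure_pmf.expectation P (\<lambda>h. sum_list (map (\<lambda>r. \<Sum>w\<in>V. (case r of (v,j,M) \<Rightarrow> if v = w then snd M j else 0)) h))"
      unfolding revenue_def P_def[symmetric]
    proof (rule EH_cong[OF supp'])
      fix r assume "G r"
      then obtain v j M where r: "r = (v,j,M)" "v \<in> V" by (cases r) (auto simp: Gd)
      have "(\<Sum>w\<in>V. if v = w then snd M j else 0) = snd M j"
        using fin r(2) unfolding V_def by (simp add: sum.delta)
      thus "(case r of (v, j, M) \<Rightarrow> snd M j) = (\<Sum>w\<in>V. case r of (v, j, M) \<Rightarrow> if v = w then snd M j else 0)"
        unfolding r(1) by simp
    qed
    also have "\<dots> = measure_pmf.expectation P (\<lambda>h. \<Sum>w\<in>V. sum_list (map (\<lambda>r. case r of (v,j,M) \<Rightarrow> if v = w then snd M j else 0) h))"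
      using fin unfolding V_def by (subst sum_list_swap) auto
    also have "\<dots> = (\<Sum>w\<in>V. Z w)"
      unfolding Z_def
    proof (rule Bochner_Integration.integral_sum)
      fix w
      show "integrable (measure_pmf P) (\<lambda>h. sum_list (map (\<lambda>r. case r of (v,j,M) \<Rightarrow> if v = w then snd M j else 0) h))"
      proof (rule EH_int[OF supp, where B=1])
        fix r assume gr: "G r"
        obtain v j a p where r: "r = (v, j, (a, p))" by (cases r) auto
        show "\<bar>case r of (v, j, M) \<Rightarrow> if v = w then snd M j else 0\<bar> \<le> 1"
          using sndb'[of v j a p] gr unfolding r by simp
      qed
    qed
    finally show ?thesis .
  qed
  have "(revenue D S A T - real (card V) * \<rho>) / real T \<le> MBRev D"
  proof -
    have "(\<Sum>v\<in>V. v * X v - U v - \<rho>) = revenue D S A T - real (card V) * \<rho>"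
      unfolding rev by (simp add: sum_subtractf XUZ)
    thus ?thesis using MBRev_upper[OF fin V01 feas] obj by simp
  qed
  hence "revenue D S A T - real (card V) * \<rho> \<le> MBRev D * real T"
    using Tpos by (simp add: divide_le_eq)
  moreover have "real (card V) * \<rho> \<le> real (card V) * \<bar>\<rho>\<bar>" by (simp add: mult_left_mono)
  ultimately show ?thesis unfolding V_def by linarith
qed


theorem theoremC3:
  fixes D :: "real pmf" and K :: "nat \<Rightarrow> nat" and b :: "nat \<Rightarrow> nat \<Rightarrow> real"
    and S :: "nat \<Rightarrow> seller_strat" and A :: "nat \<Rightarrow> buyer_alg" and r :: "nat \<Rightarrow> real"
  assumes "finite (set_pmf D)" and "set_pmf D \<subseteq> {0..1}"
    and "\<forall>T. valid_seller (K T) (b T) (S T)"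
    and "\<forall>T. buyer_arms D (K T) (A T)"
    and "\<forall>T. conservative D (b T) (A T)"
    and "r \<in> o(\<lambda>T. real T)"
    and "\<forall>T. \<forall>v \<in> set_pmf D. \<forall>k \<le> K T. b T k \<le> v \<longrightarrow>
           util_fixed D (S T) (A T) T v k \<le> util_actual D (S T) (A T) T v + r T"
  shows "\<exists>g. g \<in> o(\<lambda>T. real T) \<and>
           (\<forall>T. revenue D (S T) (A T) T \<le> MBRev D * real T + g T)"
proof (intro exI conjI allI)
  show "(\<lambda>T. real (card (set_pmf D)) * \<bar>r T\<bar>) \<in> o(\<lambda>T. real T)"
    using assms(6) by simp
  fix T
  show "revenue D (S T) (A T) T \<le> MBRev D * real T + real (card (set_pmf D)) * \<bar>r T\<bar>"
    by (rule main_T) (use assms in auto)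
qed

end
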